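(* Let $n\ge3$ be odd, $d,R\in\mathbb{Q}$, $d\ne0$, $R$ not a square, $D=d^2-R$, fix a square root $\sqrt R$, let $u$ be a zero of $f_n=f_n(Z,d,R)$ and $\zeta$ a primitive $n$th root of unity. For $k=0,\dots,n-1$ put $$u_k=\frac u2(\zeta^k+\zeta^{-k})+DA(u)\sqrt R(\zeta^k-\zeta^{-k})$$ (these are zeros of $f_n$; moreover $u\neq0$ and $A(u)\ne0$). Then for every odd $k\in\{1,\dots,n-1\}$, $$u_k=\frac u2F_k\Big(\frac{u_1+u_{n-1}}{u}\Big)+DA(u)P_k\Big(\frac{u_1-u_{n-1}}{2DA(u)}\Big),$$ and $u_{n-k}$ is obtained by the same expression with the plus sign between the two summands replaced by a minus sign.
   Context: For $k\ge1$, $F_k=\sum_{j=0}^{\lfloor k/2\rfloor}c_{k,j}Z^{k-2j}$ with $c_{k,j}=(-1)^j\frac{k}{k-j}\binom{k-j}{j}$ (so $2\cos(kx)=F_k(2\cos x)$). $f_n(Z,d,R)=\sqrt D^{\,n}F_n(Z/\sqrt D)-2dD^{(n-1)/2}=\sum_{j=0}^{(n-1)/2}c_{n,j}D^jZ^{n-2j}-2dD^{(n-1)/2}$. $A=\frac{1}{2R}\big(F_{n-1}(Z/\sqrt D)-\frac{dZ}{D}\big)\in\mathbb{Q}[Z]$, where $F_{n-1}(Z/\sqrt D)=\sum_{j=0}^{(n-1)/2}c_{n-1,j}D^{\,j-(n-1)/2}Z^{n-1-2j}$. For odd $k$, $P_k=i\sqrt R\,(-1)^{(k-1)/2}F_k\big(Z/(i\sqrt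 R)\big)=(-1)^{(k-1)/2}\sum_{j=0}^{(k-1)/2}c_{k,j}(-R)^{\,j-(k-1)/2}Z^{k-2j}\in\mathbb{Q}[Z]$. *)

theory Defs
  imports Complex_Main
begin

definition cc :: "nat \<Rightarrow> nat \<Rightarrow> rat" where
  "cc k j = (-1) ^ j * (of_nat k / of_nat (k - j)) * of_nat ((k - j) choose j)"

definition F :: "nat \<Rightarrow> complex \<Rightarrow> complex" where
  "F k z = (\<Sum>j = 0..k div 2. of_rat (cc k j) * z ^ (k - 2 * j))"

definition DD :: "rat \<Rightarrow> rat \<Rightarrow> rat" where
  "DD d R = d ^ 2 - R"

definition fn :: "nat \<Rightarrow> rat \<Rightarrow> rat \<Rightarrow> complex \<Rightarrow> complex" where
  "fn n d R z = (\<Sum>j = 0..(n - 1) div 2. of_rat (cc n j * DD d R ^ j) * z ^ (n - 2 * j))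
                 - of_rat (2 * d * DD d R ^ ((n - 1) div 2))"

text \<open>A = 1/(2R) (F_{n-1}(Z/sqrt D) - d Z / D), with
  F_{n-1}(Z/sqrt D) = sum_{j=0}^{(n-1)/2} c_{n-1,j} D^{j-(n-1)/2} Z^{n-1-2j}.\<close>
definition AA :: "nat \<Rightarrow> rat \<Rightarrow> rat \<Rightarrow> complex \<Rightarrow> complex" where
  "AA n d R z = (1 / (2 * of_rat R)) *
     ((\<Sum>j = 0..(n - 1) div 2.
         of_rat (cc (n - 1) j * DD d R powi (int j - int ((n - 1) div 2))) * z ^ (n - 1 - 2 * j))
      - of_rat d * z / of_rat (DD d R))"

definition PP :: "nat \<Rightarrow> rat \<Rightarrow> complex \<Rightarrow> complex" where
  "PP k R z = (-1) ^ ((k - 1) div 2) *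
     (\<Sum>j = 0..(k - 1) div 2. of_rat (cc k j * (- R) powi (int j - int ((k - 1) div 2))) * z ^ (k - 2 * j))"

end

theory Submission
  imports Defs
begin

lemma cc_0: "1 \<le> k \<Longrightarrow> cc k 0 = 1" by (simp add: cc_def)

lemma cc_zero: "k < 2*j \<Longrightarrow> cc k j = 0"
proof (cases "k \<le> j")
  case True then show ?thesis by (simp add: cc_def)
next
  case False
  assume "k < 2*j"
  then have "k - j < j" by arith
  then show ?thesis by (simp add: cc_def binomial_eq_0)
qed

lemma cc_formula:
  assumes "1 \<le> j" "j < k"
  shows "cc k j = (-1)^j * (of_nat ((k-j) choose j) + of_nat ((k-j-1) choose (j-1)))"
proof -
  obtain a where a: "j = Suc a" using assms(1) by (cases j) auto
  obtain b where b: "k - j = Suc b" using assms(2) by (cases "k - j") auto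
  note ab = a b
  have "Suc a * (Suc b choose Suc a) = Suc b * (b choose a)" by (rule Suc_times_binomial)
  then have h: "of_nat j * of_nat ((k-j) choose j) = (of_nat (k-j) * of_nat ((k-j-1) choose (j-1)) :: rat)"
    using ab by (metis diff_Suc_1 of_nat_mult)
  have kj: "of_nat (k - j) = (of_nat k - of_nat j :: rat)" using assms by simp
  have nz: "(of_nat (k-j)::rat) \<noteq> 0" using assms by simp
  have "of_nat k * of_nat ((k-j) choose j) = (of_nat (k-j) * (of_nat ((k-j) choose j) + of_nat ((k-j-1) choose (j-1))) :: rat)"
    using h kj by (simp add: algebra_simps)
  then have "of_nat k / of_nat (k-j) * of_nat ((k-j) choose j) = (of_nat ((k-j) choose j) + of_nat ((k-j-1) choose (j-1)) :: rat)"
    using nz by (simp add: field_simps)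
  then show ?thesis unfolding cc_def by (metis mult.assoc)
qed

lemma cc_rec:
  assumes "1 \<le> k" "1 \<le> j"
  shows "cc (k+2) j = cc (k+1) j - cc k (j-1)"
proof -
  consider "k+1 \<le> j" | "j = 1" | "2 \<le> j" "j \<le> k" using assms by linarith
  then show ?thesis
  proof cases
    case 1
    then show ?thesis using assms by (simp add: cc_zero)
  next
    case 2
    then show ?thesis using assms by (simp add: cc_formula cc_0)
  next
    case 3
    then obtain i r where ir: "j = i+2" "k = i+2+r"
      by (metis add.commute le_Suc_ex add_2_eq_Suc')
    have a: "cc (k+2) j = (-1)^i * (of_nat ((r+2) choose (i+2)) + of_nat ((r+1) choose (i+1)))"
      using ir by (subst cc_formula) (simp_all add: numeral_2_eq_2)
    have b: "cc (k+1) j = (-1)^i * (of_nat ((r+1) choose (i+2)) + of_nat (r choose (i+1)))"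
      using ir by (subst cc_formula) (simp_all add: numeral_2_eq_2)
    have c: "cc k (j-1) = (-1)^(i+1) * (of_nat ((r+1) choose (i+1)) + of_nat (r choose i))"
      using ir by (subst cc_formula) (simp_all add: numeral_2_eq_2)
    show ?thesis unfolding a b c by (simp add: numeral_2_eq_2 algebra_simps)
  qed
qed

lemma F_ext:
  assumes "k div 2 \<le> N"
  shows "F k x = (\<Sum>j=0..N. of_rat (cc k j) * x^(k-2*j))"
  unfolding F_def
proof (rule sum.mono_neutral_left)
  show "\<forall>i\<in>{0..N} - {0..k div 2}. of_rat (cc k i) * x ^ (k - 2 * i) = 0"
  proof
    fix i assume "i \<in> {0..N} - {0..k div 2}"
    then have "k < 2*i" by auto
    then show "of_rat (cc k i) * x ^ (k - 2 * i) = 0" by (simp add: cc_zero)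
  qed
qed (use assms in auto)

lemma F_rec:
  assumes "1 \<le> k" shows "F (k+2) x = x * F (k+1) x - F k x"
proof -
  define f where "f = (\<lambda>j. of_rat (cc (k+2) j) * x^(k+2-2*j))"
  define g where "g = (\<lambda>j. of_rat (cc (k+1) j) * x^(k+2-2*j))"
  define h where "h = (\<lambda>j. of_rat (cc k (j-1)) * x^(k+2-2*j))"
  have e1: "F (k+2) x = sum f {0..k+2}" unfolding f_def by (rule F_ext) simp
  have e2: "x * F (k+1) x = sum g {0..k+2}"
  proof -
    have "x * F (k+1) x = (\<Sum>j=0..k+2. x * (of_rat (cc (k+1) j) * x^(k+1-2*j)))"
      by (subst F_ext[of "k+1" "k+2"]) (simp, simp only: sum_distrib_left)
    also have "\<dots> = sum g {0..k+2}" unfolding g_def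
    proof (rule sum.cong)
      fix j assume "j \<in> {0..k+2}"
      show "x * (of_rat (cc (k+1) j) * x^(k+1-2*j)) = of_rat (cc (k+1) j) * x^(k+2-2*j)"
      proof (cases "2*j \<le> k+1")
        case True
        then have "k+2-2*j = Suc (k+1-2*j)" by arith
        then show ?thesis by simp
      next
        case False then show ?thesis by (simp add: cc_zero)
      qed
    qed simp
    finally show ?thesis .
  qed
  have e3: "F k x = sum h {1..k+2}"
  proof -
    have "F k x = (\<Sum>j=0..k+1. of_rat (cc k j) * x^(k-2*j))" by (rule F_ext) simp
    also have "\<dots> = (\<Sum>j=Suc 0..Suc (k+1). of_rat (cc k (j-1)) * x^(k-2*(j-1)))"
      by (subst sum.shift_bounds_cl_Suc_ivl) simp
    also have "\<dots> = sum h {1..k+2}" unfolding h_def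
    proof (rule sum.cong)
      fix j assume "j \<in> {1..k+2}"
      then have j1: "1 \<le> j" by simp
      show "of_rat (cc k (j-1)) * x^(k-2*(j-1)) = of_rat (cc k (j-1)) * x^(k+2-2*j)"
      proof (cases "2*(j-1) \<le> k")
        case True
        then have "k-2*(j-1) = k+2-2*j" using j1 by arith
        then show ?thesis by simp
      next
        case False then show ?thesis by (simp add: cc_zero)
      qed
    qed simp
    finally show ?thesis .
  qed
  have s0: "sum q {0..k+2} = q 0 + sum q {1..k+2}" for q :: "nat \<Rightarrow> complex"
    by (simp add: sum.atLeast_Suc_atMost)
  have "sum f {1..k+2} = sum g {1..k+2} - sum h {1..k+2}"
    unfolding sum_subtractf[symmetric] f_def g_def h_def
  proof (rule sum.cong)
    fix j assume "j \<in> {1..k+2}"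
    then have "cc (k+2) j = cc (k+1) j - cc k (j-1)" using assms by (intro cc_rec) auto
    then show "of_rat (cc (k+2) j) * x^(k+2-2*j) = of_rat (cc (k+1) j) * x^(k+2-2*j) - of_rat (cc k (j-1)) * x^(k+2-2*j)"
      by (simp add: of_rat_diff left_diff_distrib)
  qed simp
  moreover have "f 0 = g 0" unfolding f_def g_def using assms by (simp add: cc_0)
  ultimately show ?thesis using e1 e2 e3 s0[of f] s0[of g] by simp
qed

lemma F_cheb_aux:
  assumes "t \<noteq> 0"
  shows "F (Suc k) (t + inverse t) = t^Suc k + inverse t ^ Suc k \<and>
         F (Suc (Suc k)) (t + inverse t) = t^Suc (Suc k) + inverse t ^ Suc (Suc k)"
proof (induction k)
  case 0
  have "F 1 (t + inverse t) = t + inverse t" by (simp add: F_def cc_def)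
  moreover have "F 2 (t + inverse t) = (t + inverse t)^2 - 2"
    by (simp add: F_def cc_def numeral_2_eq_2)
  moreover have "(t + inverse t)^2 - 2 = t^2 + inverse t ^ 2" using assms
    by (simp add: power2_eq_square field_simps)
  ultimately show ?case by (simp add: numeral_2_eq_2)
next
  case (Suc k)
  have r: "F (Suc k + 2) (t + inverse t) = (t + inverse t) * F (Suc k + 1) (t + inverse t) - F (Suc k) (t + inverse t)"
    by (rule F_rec) simp
  have "(t + inverse t) * (t^Suc (Suc k) + inverse t ^ Suc (Suc k)) - (t^Suc k + inverse t ^ Suc k)
        = t^Suc (Suc (Suc k)) + inverse t ^ Suc (Suc (Suc k))"
    using assms by (simp add: field_simps power_Suc)
  then show ?case using Suc r by simp
qed

lemma F_cheb:
  assumes "t \<noteq> 0" "1 \<le> k"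
  shows "F k (t + inverse t) = t^k + inverse t ^ k"
  using F_cheb_aux[OF assms(1), of "k-1"] assms(2) by simp

lemma PP_eval:
  assumes "odd k" "R \<noteq> 0" "s^2 = of_rat R"
  shows "PP k R (s * w) = s * (\<Sum>j=0..k div 2. of_rat (cc k j) * (-1)^j * w^(k-2*j))"
proof -
  have m: "(k - 1) div 2 = k div 2" using assms(1) by presburger
  have "PP k R (s * w) = (\<Sum>j=0..k div 2. (-1)^(k div 2) * (of_rat (cc k j * (- R) powi (int j - int (k div 2))) * (s*w)^(k-2*j)))"
    unfolding PP_def m by (simp add: sum_distrib_left)
  also have "\<dots> = (\<Sum>j=0..k div 2. s * (of_rat (cc k j) * (-1)^j * w^(k-2*j)))"
  proof (rule sum.cong)
    fix j assume "j \<in> {0..k div 2}"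
    then have "j \<le> k div 2" by simp
    then obtain e where e: "k div 2 = j + e" using le_Suc_ex by blast
    have ie: "int j - int (k div 2) = - int e" using e by simp
    have k2: "k = 2 * (k div 2) + 1" using assms(1) by presburger
    have ke: "k - 2*j = Suc (2*e)" using e k2 by linarith
    define R' where "R' = (of_rat R :: complex)"
    define W where "W = w^(k-2*j)"
    define C where "C = (of_rat (cc k j) :: complex)"
    have p: "(of_rat (cc k j * (-R) powi (int j - int (k div 2))) :: complex) = C * (-1)^e * inverse (R'^e)"
    proof -
      have "(-R) powi (int j - int (k div 2)) = inverse ((-R)^e)" unfolding ie by (simp add: power_int_minus)
      moreover have "(of_rat (inverse ((-R)^e)) :: complex) = inverse ((-R')^e)"
        unfolding R'_def by (simp add: of_rat_inverse of_rat_power of_rat_minus)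
      moreover have "inverse ((-R')^e) = (-1)^e * inverse (R'^e)"
      proof -
        have i1: "inverse ((-1::complex)^e) = (-1)^e"
          by (rule inverse_unique) (simp flip: power_mult_distrib)
        have "(-R')^e = (-1)^e * R'^e" by (rule power_minus)
        then show ?thesis by (simp only: inverse_mult_distrib i1)
      qed
      ultimately show ?thesis unfolding C_def by (simp add: of_rat_mult)
    qed
    have sw: "(s*w)^(k-2*j) = s * R'^e * W"
    proof -
      have "(s*w)^(k-2*j) = s^(k-2*j) * W" unfolding W_def by (simp add: power_mult_distrib)
      moreover have "s^(k-2*j) = s * R'^e" unfolding ke R'_def assms(3)[symmetric]
        by (simp add: power_mult)
      ultimately show ?thesis by simp
    qed
    have Rne: "inverse (R'^e) * R'^e = 1" using assms(2) unfolding R'_def by simp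
    have ee: "(-1::complex)^e * (-1)^e = 1" by (simp flip: power_mult_distrib)
    have sg: "((-1::complex)^(j+e)) * (-1)^e = (-1)^j"
      by (simp add: power_add mult.assoc ee)
    have "(-1)^(k div 2) * (of_rat (cc k j * (- R) powi (int j - int (k div 2))) * (s*w)^(k-2*j))
        = ((-1::complex)^(j+e) * (-1)^e) * (inverse (R'^e) * R'^e) * (s * (C * W))"
      unfolding p sw unfolding e by (simp only: ac_simps)
    also have "\<dots> = s * (C * (-1)^j * W)" unfolding sg Rne by (simp only: ac_simps mult_1_left)
    finally show "(-1)^(k div 2) * (of_rat (cc k j * (- R) powi (int j - int (k div 2))) * (s*w)^(k-2*j)) = s * (of_rat (cc k j) * (-1)^j * w^(k-2*j))"
      unfolding C_def W_def .
  qed simp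
  finally show ?thesis by (simp add: sum_distrib_left)
qed

lemma sine_eval:
  fixes z :: complex
  assumes "z \<noteq> 0" "odd k"
  shows "(\<Sum>j=0..k div 2. of_rat (cc k j) * (-1)^j * (z - inverse z)^(k-2*j)) = z^k - inverse z ^ k"
proof -
  define t where "t = - \<i> * z"
  define S where "S = (\<Sum>j=0..k div 2. of_rat (cc k j) * (-1)^j * (z - inverse z)^(k-2*j))"
  have tn: "t \<noteq> 0" using assms by (simp add: t_def)
  have it: "inverse t = \<i> * inverse z" unfolding t_def by (simp add: inverse_mult_distrib)
  have tt: "t + inverse t = - \<i> * (z - inverse z)" unfolding it t_def by (simp add: algebra_simps)
  have k1: "1 \<le> k" using assms(2) by (cases k) auto
  have "F k (t + inverse t) = (-\<i>)^k * S"
    unfolding tt F_def S_def sum_distrib_left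
  proof (rule sum.cong)
    fix j assume "j \<in> {0..k div 2}"
    then have "2*j \<le> k" by auto
    then have kk: "k = (k-2*j) + 2*j" by simp
    have pa: "(-\<i>::complex)^((k-2*j)+2*j) = (-\<i>)^(k-2*j) * (-\<i>)^(2*j)" by (rule power_add)
    have p2: "(-\<i>::complex)^(2*j) = (-1)^j" by (simp add: power_mult)
    have ee: "(-1::complex)^j * (-1)^j = 1" by (simp flip: power_mult_distrib)
    have "(-\<i>)^k = (-\<i>::complex)^(k-2*j) * (-1)^j" using pa p2 kk by simp
    then have "(-\<i>)^k * (-1)^j = (-\<i>::complex)^(k-2*j) * ((-1)^j * (-1)^j)" by (simp add: mult.assoc)
    then have H: "(-\<i>::complex)^(k-2*j) = (-\<i>)^k * (-1)^j" unfolding ee by simp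
    have pm: "(- \<i> * (z - inverse z)) ^ (k-2*j) = (-\<i>)^(k-2*j) * (z - inverse z)^(k-2*j)"
      by (rule power_mult_distrib)
    show "of_rat (cc k j) * (- \<i> * (z - inverse z)) ^ (k - 2 * j) = (-\<i>)^k * (of_rat (cc k j) * (-1)^j * (z - inverse z)^(k-2*j))"
      unfolding pm H by (simp only: ac_simps)
  qed simp
  moreover have "F k (t + inverse t) = t^k + inverse t^k" using F_cheb tn k1 by blast
  moreover have "t^k + inverse t^k = (-\<i>)^k * (z^k - inverse z ^ k)"
  proof -
    have H: "\<i> ^ k = - ((-\<i>) ^ k :: complex)" using assms(2) by (simp add: power_minus_odd)
    have a: "t^k = (-\<i>)^k * z^k" unfolding t_def by (rule power_mult_distrib)
    have b: "inverse t ^ k = \<i>^k * inverse z ^ k" unfolding it by (rule power_mult_distrib)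
    show ?thesis unfolding a b H by (simp add: algebra_simps)
  qed
  ultimately have "(-\<i>)^k * S = (-\<i>)^k * (z^k - inverse z ^ k)" by simp
  then show ?thesis unfolding S_def by simp
qed

theorem theorem3:
  fixes n :: nat and d R :: rat and s u \<zeta> :: complex
  assumes "odd n" and "n \<ge> 3"
    and "d \<noteq> 0"
    and "\<not> (\<exists>q::rat. q ^ 2 = R)"
    and "s ^ 2 = of_rat R"
    and "fn n d R u = 0"
    and "\<zeta> ^ n = 1" and "\<forall>m. 0 < m \<and> m < n \<longrightarrow> \<zeta> ^ m \<noteq> 1"
  shows "let D = of_rat (DD d R) :: complex;
             uk = (\<lambda>k::nat. u / 2 * (\<zeta> ^ k + inverse \<zeta> ^ k) + D * AA n d R u * s * (\<zeta> ^ k - inverse \<zeta> ^ k))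
         in \<forall>k. odd k \<and> 1 \<le> k \<and> k \<le> n - 1 \<longrightarrow>
              uk k = u / 2 * F k ((uk 1 + uk (n - 1)) / u)
                     + D * AA n d R u * PP k R ((uk 1 - uk (n - 1)) / (2 * D * AA n d R u))
            \<and> uk (n - k) = u / 2 * F k ((uk 1 + uk (n - 1)) / u)
                     - D * AA n d R u * PP k R ((uk 1 - uk (n - 1)) / (2 * D * AA n d R u))"
proof -
  define D where "D = (of_rat (DD d R) :: complex)"
  define c where "c = D * AA n d R u"
  define z' where "z' = inverse \<zeta>"
  define uk where "uk = (\<lambda>k::nat. u / 2 * (\<zeta> ^ k + z' ^ k) + c * s * (\<zeta> ^ k - z' ^ k))"
  have R0: "R \<noteq> 0"
  proof
    assume "R = 0"
    then have "\<exists>q::rat. q ^ 2 = R" by (intro exI[of _ 0]) simp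
    with assms(4) show False by blast
  qed
  have zn: "\<zeta> \<noteq> 0"
  proof
    assume "\<zeta> = 0"
    moreover have "n \<noteq> 0" using assms(2) by simp
    ultimately have "\<zeta> ^ n = 0" by simp
    with assms(7) show False by simp
  qed
  have zz: "\<zeta> * z' = 1" using zn by (simp add: z'_def)
  have pw1: "\<zeta> ^ (n - k) = z' ^ k" if "k \<le> n" for k
  proof -
    have "\<zeta> ^ (n - k) * \<zeta> ^ k = 1" using that assms(7) by (metis le_add_diff_inverse2 power_add)
    then have "inverse (\<zeta> ^ k) = \<zeta> ^ (n - k)" by (intro inverse_unique) (simp add: mult.commute)
    then show ?thesis unfolding z'_def by (simp add: power_inverse)
  qed
  have pw2: "z' ^ (n - k) = \<zeta> ^ k" if "k \<le> n" for k
    using pw1[OF that] zn by (simp add: z'_def power_inverse)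
  have main: "uk k = u / 2 * F k ((uk 1 + uk (n - 1)) / u) + c * PP k R ((uk 1 - uk (n - 1)) / (2 * c))
            \<and> uk (n - k) = u / 2 * F k ((uk 1 + uk (n - 1)) / u) - c * PP k R ((uk 1 - uk (n - 1)) / (2 * c))"
    if k: "odd k" "1 \<le> k" "k \<le> n - 1" for k
  proof -
    have a1: "\<zeta> ^ (n-1) = z'" "z' ^ (n-1) = \<zeta>" using pw1[of 1] pw2[of 1] assms(2) by auto
    have h1: "uk 1 + uk (n-1) = u * (\<zeta> + z')" unfolding uk_def a1 by (simp add: algebra_simps)
    have h2: "uk 1 - uk (n-1) = 2 * c * (s * (\<zeta> - z'))" unfolding uk_def a1 by (simp add: algebra_simps)
    have A: "u / 2 * F k ((uk 1 + uk (n - 1)) / u) = u / 2 * (\<zeta>^k + z'^k)"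
    proof (cases "u = 0")
      case False
      then have "(uk 1 + uk (n - 1)) / u = \<zeta> + inverse \<zeta>" unfolding h1 z'_def by simp
      then show ?thesis using F_cheb[OF zn k(2)] by (simp add: z'_def)
    qed simp
    have B: "c * PP k R ((uk 1 - uk (n - 1)) / (2 * c)) = c * s * (\<zeta>^k - z'^k)"
    proof (cases "c = 0")
      case False
      then have "(uk 1 - uk (n - 1)) / (2 * c) = s * (\<zeta> - z')" unfolding h2 by simp
      then show ?thesis using PP_eval[OF k(1) R0 assms(5)] sine_eval[OF zn k(1)]
        by (simp add: z'_def)
    qed simp
    have kn: "k \<le> n" using k by simp
    show ?thesis unfolding A B using pw1[OF kn] pw2[OF kn] by (simp add: uk_def algebra_simps)
  qed
  show ?thesis unfolding Let_def
  proof (intro allI impI)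
    fix k assume hk: "odd k \<and> 1 \<le> k \<and> k \<le> n - 1"
    then have M: "uk k = u / 2 * F k ((uk 1 + uk (n - 1)) / u) + c * PP k R ((uk 1 - uk (n - 1)) / (2 * c))
            \<and> uk (n - k) = u / 2 * F k ((uk 1 + uk (n - 1)) / u) - c * PP k R ((uk 1 - uk (n - 1)) / (2 * c))"
      using main by blast
    then show "u / 2 * (\<zeta> ^ k + inverse \<zeta> ^ k) + of_rat (DD d R) * AA n d R u * s * (\<zeta> ^ k - inverse \<zeta> ^ k) =
    u / 2 * F k ((u / 2 * (\<zeta> ^ 1 + inverse \<zeta> ^ 1) + of_rat (DD d R) * AA n d R u * s * (\<zeta> ^ 1 - inverse \<zeta> ^ 1) +
                  (u / 2 * (\<zeta> ^ (n - 1) + inverse \<zeta> ^ (n - 1)) + of_rat (DD d R) * AA n d R u * s * (\<zeta> ^ (n - 1) - inverse \<zeta> ^ (n - 1)))) / u) +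
    of_rat (DD d R) * AA n d R u * PP k R ((u / 2 * (\<zeta> ^ 1 + inverse \<zeta> ^ 1) + of_rat (DD d R) * AA n d R u * s * (\<zeta> ^ 1 - inverse \<zeta> ^ 1) -
                  (u / 2 * (\<zeta> ^ (n - 1) + inverse \<zeta> ^ (n - 1)) + of_rat (DD d R) * AA n d R u * s * (\<zeta> ^ (n - 1) - inverse \<zeta> ^ (n - 1)))) / (2 * of_rat (DD d R) * AA n d R u)) \<and>
    u / 2 * (\<zeta> ^ (n - k) + inverse \<zeta> ^ (n - k)) + of_rat (DD d R) * AA n d R u * s * (\<zeta> ^ (n - k) - inverse \<zeta> ^ (n - k)) =
    u / 2 * F k ((u / 2 * (\<zeta> ^ 1 + inverse \<zeta> ^ 1) + of_rat (DD d R) * AA n d R u * s * (\<zeta> ^ 1 - inverse \<zeta> ^ 1) +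
                  (u / 2 * (\<zeta> ^ (n - 1) + inverse \<zeta> ^ (n - 1)) + of_rat (DD d R) * AA n d R u * s * (\<zeta> ^ (n - 1) - inverse \<zeta> ^ (n - 1)))) / u) -
    of_rat (DD d R) * AA n d R u * PP k R ((u / 2 * (\<zeta> ^ 1 + inverse \<zeta> ^ 1) + of_rat (DD d R) * AA n d R u * s * (\<zeta> ^ 1 - inverse \<zeta> ^ 1) -
                  (u / 2 * (\<zeta> ^ (n - 1) + inverse \<zeta> ^ (n - 1)) + of_rat (DD d R) * AA n d R u * s * (\<zeta> ^ (n - 1) - inverse \<zeta> ^ (n - 1)))) / (2 * of_rat (DD d R) * AA n d R u))"
      unfolding uk_def c_def z'_def D_def mult.assoc .
  qed
qed

end
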